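(* Let $X$ be a set and $\varphi_P\in\Im(P(X))$. Then $\varphi_P$ is a pre-subbase of some fuzzifying topology on $X$ if and only if $\varphi_P^{(\cup)}(X)=1$, where $\varphi_P^{(\cup)}(A)=\bigvee\{\bigwedge_{\lambda\in\Lambda}\varphi_P(B_\lambda):\bigcup_{\lambda\in\Lambda}B_\lambda=A\}$.
   Context: $\Im(Y)$ denotes the fuzzy subsets $Y\to[0,1]$ and $P(X)$ the power set. A fuzzifying topology on $X$ is $T\in\Im(P(X))$ with $T(X)=1$, $T(A\cap B)\ge\min(T(A),T(B))$ and $T(\bigcup_\lambda A_\lambda)\ge\inf_\lambda T(A_\lambda)$. A fuzzy family $\beta\in\Im(P(X))$ is a pre-base of $T$ if $\beta\le T$ pointwise and for all $x\in X$, $A\subseteq X$: $\sup_{x\in B\subseteq A}T(B)\le\sup_{x\in B\subseteq A}\beta(B)$. For $\varphi_P\in\Im(P(X))$ define $\varphi_P^{\Cap}(A)=\sup\{\min_{1\le i\le n}\varphi_P(B_i): n\ge1,\ B_1,\dots,B_n\subseteq X,\ \bigcap_{i=1}^nB_i=A\}$; $\varphi_P$ is a pre-subbase of $T$ if $\varphi_P^{\Cap}$ is a pre-base of $T$. *)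

theory Defs
  imports Main "HOL.Real"
begin

text \<open>Fuzzy families on P(X) are functions 'a set => real; only their values on
subsets of the carrier X matter. Sup/inf are taken in the complete lattice [0,1]:
the supremum of the empty set is 0 and the infimum of the empty set is 1.\<close>

definition fsup :: "real set \<Rightarrow> real" where
  "fsup S = (if S = {} then 0 else Sup S)"

definition finf :: "real set \<Rightarrow> real" where
  "finf S = (if S = {} then 1 else Inf S)"

definition fuzzy_family :: "'a set \<Rightarrow> ('a set \<Rightarrow> real) \<Rightarrow> bool" where
  "fuzzy_family X phi \<longleftrightarrow> (\<forall>A. A \<subseteq> X \<longrightarrow> 0 \<le> phi A \<and> phi A \<le> 1)"

definition fuzzifying_topology :: "'a set \<Rightarrow> ('a set \<Rightarrow> real) \<Rightarrow> bool" where
  "fuzzifying_topology X T \<longleftrightarrow>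
     fuzzy_family X T \<and> T X = 1 \<and>
     (\<forall>A B. A \<subseteq> X \<longrightarrow> B \<subseteq> X \<longrightarrow> T (A \<inter> B) \<ge> min (T A) (T B)) \<and>
     (\<forall>\<F>. \<F> \<subseteq> Pow X \<longrightarrow> T (\<Union>\<F>) \<ge> finf (T ` \<F>))"

definition pre_base :: "'a set \<Rightarrow> ('a set \<Rightarrow> real) \<Rightarrow> ('a set \<Rightarrow> real) \<Rightarrow> bool" where
  "pre_base X beta T \<longleftrightarrow>
     (\<forall>A. A \<subseteq> X \<longrightarrow> beta A \<le> T A) \<and>
     (\<forall>x A. x \<in> X \<longrightarrow> A \<subseteq> X \<longrightarrow>
        fsup {T B | B. x \<in> B \<and> B \<subseteq> A} \<le> fsup {beta B | B. x \<in> B \<and> B \<subseteq> A})"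

text \<open>Finite-intersection closure: sup over n >= 1 and B_1..B_n \<subseteq> X with
intersection A of min phi(B_i); a finite list of sets is represented by the nonempty finite
set of its members (the minimum only depends on these).\<close>
definition cap_closure :: "'a set \<Rightarrow> ('a set \<Rightarrow> real) \<Rightarrow> 'a set \<Rightarrow> real" where
  "cap_closure X phi A =
     fsup {finf (phi ` \<F>) | \<F>. \<F> \<noteq> {} \<and> finite \<F> \<and> \<F> \<subseteq> Pow X \<and> \<Inter>\<F> = A}"

definition pre_subbase :: "'a set \<Rightarrow> ('a set \<Rightarrow> real) \<Rightarrow> ('a set \<Rightarrow> real) \<Rightarrow> bool" where
  "pre_subbase X phi T \<longleftrightarrow> pre_base X (cap_closure X phi) T"

definition union_closure :: "'a set \<Rightarrow> ('a set \<Rightarrow> real) \<Rightarrow> 'a set \<Rightarrow> real" where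
  "union_closure X phi A =
     fsup {finf (phi ` \<F>) | \<F>. \<F> \<subseteq> Pow X \<and> \<Union>\<F> = A}"

end

theory Submission
  imports Defs
begin

lemma fsup_le: "(\<And>s. s \<in> S \<Longrightarrow> s \<le> c) \<Longrightarrow> 0 \<le> c \<Longrightarrow> fsup S \<le> c"
  unfolding fsup_def by (auto intro: cSup_least)

lemma le_fsup: "s \<in> S \<Longrightarrow> bdd_above S \<Longrightarrow> s \<le> fsup S"
  unfolding fsup_def by (auto intro: cSup_upper)

lemma finf_ge: "(\<And>s. s \<in> S \<Longrightarrow> c \<le> s) \<Longrightarrow> c \<le> 1 \<Longrightarrow> c \<le> finf S"
  unfolding finf_def by (auto intro: cInf_greatest)

lemma finf_le: "s \<in> S \<Longrightarrow> bdd_below S \<Longrightarrow> finf S \<le> s"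
  unfolding finf_def by (auto intro: cInf_lower)

lemma finf_le1: "(\<And>s. s \<in> S \<Longrightarrow> 0 \<le> s \<and> s \<le> (1::real)) \<Longrightarrow> finf S \<le> 1"
proof (cases "S = {}")
  case True then show ?thesis by (simp add: finf_def)
next
  case False
  assume h: "\<And>s. s \<in> S \<Longrightarrow> 0 \<le> s \<and> s \<le> (1::real)"
  obtain s where s: "s \<in> S" using False by blast
  have "finf S \<le> s" by (rule finf_le[OF s]) (rule bdd_belowI[where m=0], use h in blast)
  then show ?thesis using h[OF s] by linarith
qed

lemma lt_fsup: "c < fsup S \<Longrightarrow> 0 \<le> c \<Longrightarrow> bdd_above S \<Longrightarrow> \<exists>s\<in>S. c < s"
  unfolding fsup_def by (auto split: if_splits simp: less_cSup_iff)

lemma min_sup: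
  fixes S S1 S2 :: "real set"
  assumes "bdd_above S" "S1 \<noteq> {}" "S2 \<noteq> {}" "bdd_above S1" "bdd_above S2"
    and "\<And>a b. a \<in> S1 \<Longrightarrow> b \<in> S2 \<Longrightarrow> \<exists>c\<in>S. min a b \<le> c"
  shows "min (Sup S1) (Sup S2) \<le> Sup S"
proof (rule ccontr)
  assume "\<not> ?thesis"
  then have h: "Sup S < Sup S1" "Sup S < Sup S2" by auto
  obtain a where a: "a \<in> S1" "Sup S < a" using h(1) assms by (auto simp: less_cSup_iff)
  obtain b where b: "b \<in> S2" "Sup S < b" using h(2) assms by (auto simp: less_cSup_iff)
  obtain c where "c \<in> S" "min a b \<le> c" using assms(6)[OF a(1) b(1)] by blast
  moreover have "c \<le> Sup S" using calculation assms(1) by (auto intro: cSup_upper)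
  ultimately show False using a b by linarith
qed

lemma finf_image_bounds:
  assumes "finite F" "F \<noteq> {}" "\<And>C. C \<in> F \<Longrightarrow> 0 \<le> phi C \<and> phi C \<le> (1::real)"
  shows "0 \<le> finf (phi ` F) \<and> finf (phi ` F) \<le> 1"
proof -
  obtain C where C: "C \<in> F" using assms by auto
  have "finf (phi ` F) = Inf (phi ` F)" using assms unfolding finf_def by auto
  moreover have "Inf (phi ` F) \<le> phi C" using C assms by (auto intro: cInf_lower)
  moreover have "0 \<le> Inf (phi ` F)" using assms by (auto intro!: cInf_greatest)
  ultimately show ?thesis using assms C by fastforce
qed

lemma finf_image_union:
  assumes "finite F" "F \<noteq> {}" "finite G" "G \<noteq> {}"
  shows "finf ((phi::_\<Rightarrow>real) ` (F \<union> G)) = min (finf (phi ` F)) (finf (phi ` G))"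
  using assms unfolding finf_def by (simp add: image_Un inf_min[symmetric] cInf_union_distrib)

lemma finf_img_le:
  assumes "C \<in> F" "\<And>D. D \<in> F \<Longrightarrow> 0 \<le> (phi D::real)"
  shows "finf (phi ` F) \<le> phi C"
proof (rule finf_le)
  show "phi C \<in> phi ` F" using assms by blast
  show "bdd_below (phi ` F)" by (rule bdd_belowI[where m=0]) (use assms in blast)
qed

theorem theorem2p3:
  fixes X :: "'a set" and phi :: "'a set \<Rightarrow> real"
  assumes "fuzzy_family X phi"
  shows "(\<exists>T. fuzzifying_topology X T \<and> pre_subbase X phi T) \<longleftrightarrow> union_closure X phi X = 1"
proof -
  have ph: "\<And>C. C \<subseteq> X \<Longrightarrow> 0 \<le> phi C \<and> phi C \<le> 1" using assms unfolding fuzzy_family_def by auto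
  define \<beta> where "\<beta> = cap_closure X phi"
  have capset_bd: "\<And>A. \<forall>s \<in> {finf (phi ` \<F>) | \<F>. \<F> \<noteq> {} \<and> finite \<F> \<and> \<F> \<subseteq> Pow X \<and> \<Inter>\<F> = A}. 0 \<le> s \<and> s \<le> 1"
  proof
    fix A s assume "s \<in> {finf (phi ` \<F>) | \<F>. \<F> \<noteq> {} \<and> finite \<F> \<and> \<F> \<subseteq> Pow X \<and> \<Inter>\<F> = A}"
    then obtain F where F: "F \<noteq> {}" "finite F" "F \<subseteq> Pow X" "s = finf (phi ` F)" by blast
    have "\<And>C. C \<in> F \<Longrightarrow> 0 \<le> phi C \<and> phi C \<le> 1" using F(3) ph by blast
    then show "0 \<le> s \<and> s \<le> 1" using finf_image_bounds[OF F(2,1)] F(4) by blast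
  qed
  have capset_ba: "\<And>A. bdd_above {finf (phi ` \<F>) | \<F>. \<F> \<noteq> {} \<and> finite \<F> \<and> \<F> \<subseteq> Pow X \<and> \<Inter>\<F> = A}"
    by (rule bdd_aboveI[where M=1]) (use capset_bd in blast)
  have b1: "\<And>A. \<beta> A \<le> 1" unfolding \<beta>_def cap_closure_def
    by (rule fsup_le) (use capset_bd in auto)
  have bphi: "\<And>A. A \<subseteq> X \<Longrightarrow> phi A \<le> \<beta> A"
  proof -
    fix A assume A: "A \<subseteq> X"
    have "finf (phi ` {A}) = phi A" unfolding finf_def by simp
    show "phi A \<le> \<beta> A" unfolding \<beta>_def cap_closure_def
    proof (rule le_fsup[OF _ capset_ba])
      show "phi A \<in> {finf (phi ` \<F>) | \<F>. \<F> \<noteq> {} \<and> finite \<F> \<and> \<F> \<subseteq> Pow X \<and> \<Inter>\<F> = A}"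
        using A \<open>finf (phi ` {A}) = phi A\<close> by (intro CollectI exI[of _ "{A}"]) auto
    qed
  qed
  have b0: "0 \<le> \<beta> A" if "A \<subseteq> X" for A using bphi[OF that] ph[OF that] by linarith
  have bsup: "bdd_above (\<beta> ` A)" for A
  proof (rule bdd_aboveI[where M=1])
    fix y assume "y \<in> \<beta> ` A"
    then obtain B where "y = \<beta> B" by blast
    then show "y \<le> 1" using b1[of B] by simp
  qed
  show ?thesis
  proof
    assume "\<exists>T. fuzzifying_topology X T \<and> pre_subbase X phi T"
    then obtain T where top: "fuzzifying_topology X T" and pb: "pre_base X \<beta> T"
      unfolding pre_subbase_def \<beta>_def by blast
    have TX: "T X = 1" using top unfolding fuzzifying_topology_def by auto
    have T1: "\<And>B. B \<subseteq> X \<Longrightarrow> T B \<le> 1" using top unfolding fuzzifying_topology_def fuzzy_family_def by auto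
    have unset_bd: "\<forall>s \<in> {finf (phi ` \<F>) | \<F>. \<F> \<subseteq> Pow X \<and> \<Union>\<F> = X}. s \<le> 1"
    proof
      fix s assume "s \<in> {finf (phi ` \<F>) | \<F>. \<F> \<subseteq> Pow X \<and> \<Union>\<F> = X}"
      then obtain F where F: "F \<subseteq> Pow X" "s = finf (phi ` F)" by auto
      show "s \<le> 1"
      proof (cases "F = {}")
        case True then show ?thesis using F unfolding finf_def by simp
      next
        case False
        then obtain C where "C \<in> F" by auto
        then have "s \<le> phi C" using F(2) finf_img_le[of C F phi] ph F(1) by blast
        then show ?thesis using ph \<open>C \<in> F\<close> F by force
      qed
    qed
    have unset_ba: "bdd_above {finf (phi ` \<F>) | \<F>. \<F> \<subseteq> Pow X \<and> \<Union>\<F> = X}"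
      by (rule bdd_aboveI[where M=1]) (use unset_bd in blast)
    have up: "union_closure X phi X \<le> 1" unfolding union_closure_def
      by (rule fsup_le) (use unset_bd in auto)
    have key: "1 - e \<le> union_closure X phi X" if e: "0 < e" "e < 1" for e
    proof -
      define G where "G = {C. C \<subseteq> X \<and> 1 - e \<le> phi C}"
      have "X \<subseteq> \<Union>G"
      proof
        fix x assume x: "x \<in> X"
        have "1 \<le> fsup {T B | B. x \<in> B \<and> B \<subseteq> X}"
        proof (rule le_fsup)
          show "1 \<in> {T B | B. x \<in> B \<and> B \<subseteq> X}" using TX x by (intro CollectI exI[of _ X]) auto
          show "bdd_above {T B | B. x \<in> B \<and> B \<subseteq> X}" by (rule bdd_aboveI[where M=1]) (use T1 in auto)
        qed
        also have "\<dots> \<le> fsup {\<beta> B | B. x \<in> B \<and> B \<subseteq> X}" using pb x unfolding pre_base_def by auto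
        finally have "1 - e < fsup {\<beta> B | B. x \<in> B \<and> B \<subseteq> X}" using e by linarith
        moreover have SB: "{\<beta> B | B. x \<in> B \<and> B \<subseteq> X} = \<beta> ` {B. x \<in> B \<and> B \<subseteq> X}" by auto
        ultimately have "1 - e < fsup (\<beta> ` {B. x \<in> B \<and> B \<subseteq> X})" by simp
        then obtain s where "s \<in> \<beta> ` {B. x \<in> B \<and> B \<subseteq> X}" "1 - e < s"
          using lt_fsup[OF _ _ bsup] e by (meson diff_ge_0_iff_ge less_eq_real_def)
        then obtain B where B: "x \<in> B" "B \<subseteq> X" "1 - e < \<beta> B" by auto
        have h1: "1 - e < fsup {finf (phi ` \<F>) | \<F>. \<F> \<noteq> {} \<and> finite \<F> \<and> \<F> \<subseteq> Pow X \<and> \<Inter>\<F> = B}"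
          using B(3) unfolding \<beta>_def cap_closure_def .
        have h2: "0 \<le> 1 - e" using e by simp
        obtain s' where "s' \<in> {finf (phi ` \<F>) | \<F>. \<F> \<noteq> {} \<and> finite \<F> \<and> \<F> \<subseteq> Pow X \<and> \<Inter>\<F> = B}" "1 - e < s'"
          using lt_fsup[OF h1 h2 capset_ba[of B]] by (rule bexE)
        then obtain F where F: "F \<noteq> {}" "finite F" "F \<subseteq> Pow X" "\<Inter>F = B" "1 - e < finf (phi ` F)"
          by blast
        then obtain C where C: "C \<in> F" by auto
        have "finf (phi ` F) \<le> phi C" using C(1) F(3) ph
          by (intro finf_img_le) blast+
        then have "C \<in> G" using C F unfolding G_def by auto
        moreover have "x \<in> C" using C F B by auto
        ultimately show "x \<in> \<Union>G" by auto
      qed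
      then have UG: "\<Union>G = X" unfolding G_def by auto
      have "1 - e \<le> finf (phi ` G)" by (rule finf_ge) (use e in \<open>auto simp: G_def\<close>)
      also have "\<dots> \<le> union_closure X phi X" unfolding union_closure_def
        by (rule le_fsup[OF _ unset_ba]) (use UG in \<open>auto simp: G_def\<close>)
      finally show ?thesis .
    qed
    have "1 \<le> union_closure X phi X"
    proof (rule ccontr)
      assume "\<not> ?thesis"
      then have u1: "union_closure X phi X < 1" by simp
      have u0: "0 \<le> union_closure X phi X" using key[of "1/2"] by simp
      define e where "e = (1 - union_closure X phi X) / 2"
      have "0 < e" "e < 1" using u0 u1 by (auto simp: e_def)
      then have "1 - e \<le> union_closure X phi X" by (rule key)
      then show False using u1 unfolding e_def by (simp add: field_simps)
    qed
    with up show "union_closure X phi X = 1" by simp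
  next
    assume U: "union_closure X phi X = 1"
    define N where "N = (\<lambda>x A. fsup {\<beta> B | B. x \<in> B \<and> B \<subseteq> A})"
    define T where "T = (\<lambda>A. finf {N x A | x. x \<in> A})"
    have Ndef: "N x A = fsup {\<beta> B | B. x \<in> B \<and> B \<subseteq> A}" for x A by (simp add: N_def)
    have Tdef: "T A = finf {N x A | x. x \<in> A}" for A by (simp add: T_def)
    have Nset: "\<And>x A. {\<beta> B | B. x \<in> B \<and> B \<subseteq> A} = \<beta> ` {B. x \<in> B \<and> B \<subseteq> A}" by auto
    have Nb: "\<And>x A. x \<in> A \<Longrightarrow> \<beta> A \<le> N x A"
      unfolding Ndef Nset by (rule le_fsup) (auto intro: bsup)
    have N1: "\<And>x A. N x A \<le> 1" unfolding Ndef by (rule fsup_le) (use b1 in auto)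
    have N0: "\<And>x A. A \<subseteq> X \<Longrightarrow> 0 \<le> N x A"
    proof -
      fix x A assume A: "A \<subseteq> X"
      show "0 \<le> N x A"
      proof (cases "x \<in> A")
        case True then show ?thesis using Nb[OF True] b0[OF A] by linarith
      next
        case False then show ?thesis unfolding Ndef fsup_def by auto
      qed
    qed
    have Nmono: "\<And>x A A'. A \<subseteq> A' \<Longrightarrow> A' \<subseteq> X \<Longrightarrow> N x A \<le> N x A'"
    proof -
      fix x A A' assume AA: "A \<subseteq> A'" "A' \<subseteq> X"
      show "N x A \<le> N x A'" unfolding Ndef[of x A]
      proof (rule fsup_le)
        fix s assume "s \<in> {\<beta> B | B. x \<in> B \<and> B \<subseteq> A}"
        then obtain B where "s = \<beta> B" "x \<in> B" "B \<subseteq> A" by auto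
        then show "s \<le> N x A'" unfolding Ndef Nset using AA
          by (intro le_fsup) (auto intro: bsup)
      next
        show "0 \<le> N x A'" using N0 AA by auto
      qed
    qed
    have T0: "\<And>A. A \<subseteq> X \<Longrightarrow> 0 \<le> T A" unfolding Tdef
      by (rule finf_ge) (use N0 in auto)
    have T1: "T A \<le> 1" if "A \<subseteq> X" for A unfolding Tdef
      by (rule finf_le1) (use N0 N1 that in auto)
    have TN: "\<And>x A. A \<subseteq> X \<Longrightarrow> x \<in> A \<Longrightarrow> T A \<le> N x A" unfolding Tdef
      by (rule finf_le) (use N0 in \<open>auto simp: bdd_below_def\<close>)
    have Tb: "\<And>A. A \<subseteq> X \<Longrightarrow> \<beta> A \<le> T A" unfolding Tdef
      by (rule finf_ge) (use Nb b1 in auto)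
    have bint: "\<And>C1 C2. C1 \<subseteq> X \<Longrightarrow> C2 \<subseteq> X \<Longrightarrow> min (\<beta> C1) (\<beta> C2) \<le> \<beta> (C1 \<inter> C2)"
    proof -
      fix C1 C2 assume C: "C1 \<subseteq> X" "C2 \<subseteq> X"
      define S where "S = (\<lambda>A. {finf (phi ` \<F>) | \<F>. \<F> \<noteq> {} \<and> finite \<F> \<and> \<F> \<subseteq> Pow X \<and> \<Inter>\<F> = A})"
      have ne: "S A \<noteq> {}" if "A \<subseteq> X" for A
      proof -
        have "finf (phi ` {A}) \<in> S A" unfolding S_def using that
          by (intro CollectI exI[of _ "{A}"]) auto
        then show ?thesis by blast
      qed
      have ne2: "S (C1 \<inter> C2) \<noteq> {}" using ne C by blast
      have bb: "\<beta> A = Sup (S A)" if "S A \<noteq> {}" for A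
      proof -
        have "\<beta> A = fsup (S A)" unfolding \<beta>_def cap_closure_def S_def by simp
        then show ?thesis using that by (simp add: fsup_def)
      qed
      show "min (\<beta> C1) (\<beta> C2) \<le> \<beta> (C1 \<inter> C2)"
        unfolding bb[OF ne[OF C(1)]] bb[OF ne[OF C(2)]] bb[OF ne2]
      proof (rule min_sup)
        show "bdd_above (S (C1 \<inter> C2))" "bdd_above (S C1)" "bdd_above (S C2)"
          unfolding S_def by (rule capset_ba)+
        show "S C1 \<noteq> {}" "S C2 \<noteq> {}" using ne C by auto
        fix a b assume ab: "a \<in> S C1" "b \<in> S C2"
        then obtain F G where F: "F \<noteq> {}" "finite F" "F \<subseteq> Pow X" "\<Inter>F = C1" "a = finf (phi ` F)"
          and G: "G \<noteq> {}" "finite G" "G \<subseteq> Pow X" "\<Inter>G = C2" "b = finf (phi ` G)"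
          unfolding S_def by blast
        have "finf (phi ` (F \<union> G)) \<in> S (C1 \<inter> C2)" unfolding S_def using F G
          by (intro CollectI exI[of _ "F \<union> G"]) auto
        moreover have "finf (phi ` (F \<union> G)) = min a b" using F G finf_image_union by metis
        ultimately show "\<exists>c\<in>S (C1 \<inter> C2). min a b \<le> c" by force
      qed
    qed
    have Nint: "\<And>x A B. A \<subseteq> X \<Longrightarrow> B \<subseteq> X \<Longrightarrow> x \<in> A \<Longrightarrow> x \<in> B \<Longrightarrow>
        min (N x A) (N x B) \<le> N x (A \<inter> B)"
    proof -
      fix x A B assume AB: "A \<subseteq> X" "B \<subseteq> X" "x \<in> A" "x \<in> B"
      have nn: "\<And>D. x \<in> D \<Longrightarrow> N x D = Sup (\<beta> ` {C. x \<in> C \<and> C \<subseteq> D})"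
        unfolding Ndef Nset fsup_def by auto
      show "min (N x A) (N x B) \<le> N x (A \<inter> B)"
        unfolding nn[OF AB(3)] nn[OF AB(4)] nn[of "A \<inter> B", OF IntI[OF AB(3,4)]] using AB(3,4)
      proof (intro min_sup)
        fix a b assume "a \<in> \<beta> ` {C. x \<in> C \<and> C \<subseteq> A}" "b \<in> \<beta> ` {C. x \<in> C \<and> C \<subseteq> B}"
        then obtain C1 C2 where "a = \<beta> C1" "x \<in> C1" "C1 \<subseteq> A" "b = \<beta> C2" "x \<in> C2" "C2 \<subseteq> B" by auto
        then show "\<exists>c\<in>\<beta> ` {C. x \<in> C \<and> C \<subseteq> A \<inter> B}. min a b \<le> c"
          using bint[of C1 C2] AB by (intro bexI[of _ "\<beta> (C1 \<inter> C2)"]) auto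
      qed (auto intro: bsup)
    qed
    have uc_bd: "\<forall>s \<in> {finf (phi ` \<F>) | \<F>. \<F> \<subseteq> Pow X \<and> \<Union>\<F> = X}. s \<le> 1"
    proof
      fix s assume "s \<in> {finf (phi ` \<F>) | \<F>. \<F> \<subseteq> Pow X \<and> \<Union>\<F> = X}"
      then obtain F where F: "F \<subseteq> Pow X" "s = finf (phi ` F)" by auto
      show "s \<le> 1"
      proof (cases "F = {}")
        case True then show ?thesis using F unfolding finf_def by simp
      next
        case False
        then obtain C where "C \<in> F" by auto
        then have "s \<le> phi C" using F(2) finf_img_le[of C F phi] ph F(1) by blast
        then show ?thesis using ph \<open>C \<in> F\<close> F by force
      qed
    qed
    have uc_ba: "bdd_above {finf (phi ` \<F>) | \<F>. \<F> \<subseteq> Pow X \<and> \<Union>\<F> = X}"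
      by (rule bdd_aboveI[where M=1]) (use uc_bd in blast)
    have NX: "\<And>x. x \<in> X \<Longrightarrow> 1 \<le> N x X"
    proof (rule ccontr)
      fix x assume x: "x \<in> X" and "\<not> 1 \<le> N x X"
      then have "N x X < union_closure X phi X" using U by simp
      then obtain s where "s \<in> {finf (phi ` \<F>) | \<F>. \<F> \<subseteq> Pow X \<and> \<Union>\<F> = X}" "N x X < s"
        using lt_fsup[OF _ N0 uc_ba, of x X] unfolding union_closure_def by auto
      then obtain F where F: "F \<subseteq> Pow X" "\<Union>F = X" "N x X < finf (phi ` F)" by auto
      then obtain C where C: "C \<in> F" "x \<in> C" using x by auto
      have "finf (phi ` F) \<le> phi C" using C(1) F(1) ph
        by (intro finf_img_le) blast+
      moreover have "phi C \<le> \<beta> C" using bphi C F by auto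
      moreover have "\<beta> C \<le> N x C" using Nb C by auto
      moreover have "N x C \<le> N x X" using Nmono C F by auto
      ultimately show False using F by linarith
    qed
    have top: "fuzzifying_topology X T"
      unfolding fuzzifying_topology_def fuzzy_family_def
    proof (intro conjI allI impI)
      show "\<And>A. A \<subseteq> X \<Longrightarrow> 0 \<le> T A" by (rule T0)
      show "\<And>A. A \<subseteq> X \<Longrightarrow> T A \<le> 1" by (rule T1)
      show "T X = 1"
      proof (rule antisym[OF T1[OF subset_refl]])
        show "1 \<le> T X" unfolding Tdef by (rule finf_ge) (use NX in auto)
      qed
      fix A B assume AB: "A \<subseteq> X" "B \<subseteq> X"
      show "min (T A) (T B) \<le> T (A \<inter> B)" unfolding Tdef[of "A \<inter> B"]
      proof (rule finf_ge)
        fix s assume "s \<in> {N x (A \<inter> B) | x. x \<in> A \<inter> B}"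
        then obtain x where x: "s = N x (A \<inter> B)" "x \<in> A" "x \<in> B" by auto
        have "min (T A) (T B) \<le> min (N x A) (N x B)" using TN AB x by (meson min.mono)
        also have "\<dots> \<le> s" using Nint AB x by auto
        finally show "min (T A) (T B) \<le> s" .
      qed (use T1 AB in \<open>auto simp: min_le_iff_disj\<close>)
    next
      fix \<F> :: "'a set set" assume F: "\<F> \<subseteq> Pow X"
      have fi1: "finf (T ` \<F>) \<le> 1"
        by (rule finf_le1) (use T0 T1 F in blast)
      show "finf (T ` \<F>) \<le> T (\<Union>\<F>)" unfolding Tdef[of "\<Union>\<F>"]
      proof (rule finf_ge)
        fix s assume "s \<in> {N x (\<Union>\<F>) | x. x \<in> \<Union>\<F>}"
        then obtain x A where xA: "s = N x (\<Union>\<F>)" "x \<in> A" "A \<in> \<F>" by auto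
        have "finf (T ` \<F>) \<le> T A"
        proof (rule finf_le)
          show "T A \<in> T ` \<F>" using xA by blast
          show "bdd_below (T ` \<F>)" by (rule bdd_belowI[where m=0]) (use F T0 in blast)
        qed
        also have "\<dots> \<le> N x A" using TN xA F by auto
        also have "\<dots> \<le> N x (\<Union>\<F>)" by (rule Nmono) (use xA F in blast)+
        finally show "finf (T ` \<F>) \<le> s" using xA by simp
      qed (rule fi1)
    qed
    have "pre_base X \<beta> T" unfolding pre_base_def
    proof (intro conjI allI impI)
      show "\<And>A. A \<subseteq> X \<Longrightarrow> \<beta> A \<le> T A" by (rule Tb)
      fix x A assume xA: "x \<in> X" "A \<subseteq> X"
      show "fsup {T B |B. x \<in> B \<and> B \<subseteq> A} \<le> fsup {\<beta> B |B. x \<in> B \<and> B \<subseteq> A}"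
        unfolding Ndef[symmetric]
      proof (rule fsup_le)
        fix s assume "s \<in> {T B |B. x \<in> B \<and> B \<subseteq> A}"
        then obtain B where B: "s = T B" "x \<in> B" "B \<subseteq> A" by auto
        have "T B \<le> N x B" using TN B xA by auto
        also have "\<dots> \<le> N x A" using Nmono B xA by auto
        finally show "s \<le> N x A" using B by simp
      qed (use N0 xA in auto)
    qed
    then show "\<exists>T. fuzzifying_topology X T \<and> pre_subbase X phi T"
      using top unfolding pre_subbase_def \<beta>_def by blast
  qed
qed

end
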